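(* Let $p\in(1,\infty)$. In the Banach space $\ell_p$ every closed convex cone has a convex polar if and only if $p=2$. More specifically, for $p\neq 2$ there exist wedges in $\ell_p$ (already in a three-dimensional coordinate subspace $\ell_p^3$) whose polars are not convex.
   Context: $\ell_p$ is the real sequence space with norm $\|z\|_p=(\sum_i|z_i|^p)^{1/p}$; its dual is $\ell_q$ with $q=p/(p-1)$ and the usual pairing. The normalized duality map $J:X\to X^*$ of a Banach space is defined by $\langle Jx,x\rangle=\|Jx\|_{X^*}\|x\|=\|x\|^2=\|Jx\|_{X^*}^2$. For a closed convex cone $K$, the metric projection is $P_Kx=\operatorname{argmin}\{\|x-k\|:k\in K\}$ and the polar is $K^\circ=\{x:P_Kx=0\}$. With $S^*$ the dual unit sphere, for $a,b\in S^*$, $b\notin\{a,-a\}$, $\delta(a,b)=\{(\lambda a+\mu b)/\|\lambda a+\mu b\|:\lambda,\mu\ge0,(\lambda,\mu)\ne(0,0)\}$ and the wedge is $W(a,b)=\{x:\langle c,x\rangle\le 0\ \forall c\in\delta(a,b)\}$. *)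

theory Defs
  imports "HOL-Analysis.Analysis"
begin

text \<open>Real sequence spaces l_p(I): sequences indexed by nat that vanish outside the
index set I (I = UNIV gives l_p, I = {0,1,2} gives l_p^3).\<close>

definition lp :: "real \<Rightarrow> nat set \<Rightarrow> (nat \<Rightarrow> real) set" where
  "lp p I = {z. (\<forall>i. i \<notin> I \<longrightarrow> z i = 0) \<and> summable (\<lambda>i. \<bar>z i\<bar> powr p)}"

definition lpnorm :: "real \<Rightarrow> (nat \<Rightarrow> real) \<Rightarrow> real" where
  "lpnorm p z = (\<Sum>i. \<bar>z i\<bar> powr p) powr (1 / p)"

definition conj_exp :: "real \<Rightarrow> real" where
  "conj_exp p = p / (p - 1)"

definition pairing :: "(nat \<Rightarrow> real) \<Rightarrow> (nat \<Rightarrow> real) \<Rightarrow> real" where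
  "pairing c x = (\<Sum>i. c i * x i)"

definition lp_closed :: "real \<Rightarrow> nat set \<Rightarrow> (nat \<Rightarrow> real) set \<Rightarrow> bool" where
  "lp_closed p I K \<longleftrightarrow>
     (\<forall>(xs :: nat \<Rightarrow> nat \<Rightarrow> real) x. (\<forall>n. xs n \<in> K) \<and> x \<in> lp p I \<and>
        (\<lambda>n. lpnorm p (\<lambda>i. xs n i - x i)) \<longlonglongrightarrow> 0 \<longrightarrow> x \<in> K)"

definition lconvex :: "(nat \<Rightarrow> real) set \<Rightarrow> bool" where
  "lconvex S \<longleftrightarrow> (\<forall>x\<in>S. \<forall>y\<in>S. \<forall>t::real. 0 \<le> t \<and> t \<le> 1 \<longrightarrow>
                      (\<lambda>i. t * x i + (1 - t) * y i) \<in> S)"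

definition lcone :: "(nat \<Rightarrow> real) set \<Rightarrow> bool" where
  "lcone K \<longleftrightarrow> K \<noteq> {} \<and> (\<forall>x\<in>K. \<forall>t::real. 0 \<le> t \<longrightarrow> (\<lambda>i. t * x i) \<in> K)"

definition closed_convex_cone :: "real \<Rightarrow> nat set \<Rightarrow> (nat \<Rightarrow> real) set \<Rightarrow> bool" where
  "closed_convex_cone p I K \<longleftrightarrow> K \<subseteq> lp p I \<and> lp_closed p I K \<and> lconvex K \<and> lcone K"

definition metric_proj :: "real \<Rightarrow> (nat \<Rightarrow> real) set \<Rightarrow> (nat \<Rightarrow> real) \<Rightarrow> (nat \<Rightarrow> real) set" where
  "metric_proj p K x = {k \<in> K. \<forall>k'\<in>K. lpnorm p (\<lambda>i. x i - k i) \<le> lpnorm p (\<lambda>i. x i - k' i)}"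

definition polar :: "real \<Rightarrow> nat set \<Rightarrow> (nat \<Rightarrow> real) set \<Rightarrow> (nat \<Rightarrow> real) set" where
  "polar p I K = {x \<in> lp p I. metric_proj p K x = {(\<lambda>i. 0)}}"

definition dual_sphere :: "real \<Rightarrow> nat set \<Rightarrow> (nat \<Rightarrow> real) set" where
  "dual_sphere p I = {c \<in> lp (conj_exp p) I. lpnorm (conj_exp p) c = 1}"

definition delta :: "real \<Rightarrow> (nat \<Rightarrow> real) \<Rightarrow> (nat \<Rightarrow> real) \<Rightarrow> (nat \<Rightarrow> real) set" where
  "delta p a b = {(\<lambda>i. (l * a i + m * b i) / lpnorm (conj_exp p) (\<lambda>j. l * a j + m * b j)) | l m.
                    l \<ge> 0 \<and> m \<ge> 0 \<and> (l, m) \<noteq> (0, 0)}"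

definition wedge :: "real \<Rightarrow> nat set \<Rightarrow> (nat \<Rightarrow> real) \<Rightarrow> (nat \<Rightarrow> real) \<Rightarrow> (nat \<Rightarrow> real) set" where
  "wedge p I a b = {x \<in> lp p I. \<forall>c \<in> delta p a b. pairing c x \<le> 0}"

end

theory Submission
  imports Defs
begin


lemma bern_pow:
  fixes p y :: real
  assumes p: "1 < p" and y: "0 < y" "y \<noteq> 1"
  shows "1 + p*(y-1) < y powr p"
proof (cases "y > 1")
  case True
  have der: "\<And>x. 1 \<le> x \<Longrightarrow> x \<le> y \<Longrightarrow> DERIV (\<lambda>x. x powr p) x :> p * x powr (p - 1)"
    by (rule has_real_derivative_powr) auto
  obtain z where z: "1 < z" "z < y" "y powr p - 1 powr p = (y - 1) * (p * z powr (p - 1))"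
    using MVT2[OF True der] by blast
  have "1 < z powr (p - 1)" using powr_less_mono2[of "p-1" 1 z] z p by simp
  hence "p * 1 < p * z powr (p - 1)" using p by simp
  hence "(y - 1) * p < (y - 1) * (p * z powr (p - 1))" using True by (intro mult_strict_left_mono) auto
  thus ?thesis using z by (simp add: algebra_simps)
next
  case False
  hence yl: "y < 1" using y by simp
  have der: "\<And>x. y \<le> x \<Longrightarrow> x \<le> 1 \<Longrightarrow> DERIV (\<lambda>x. x powr p) x :> p * x powr (p - 1)"
    by (rule has_real_derivative_powr) (use y in auto)
  obtain z where z: "y < z" "z < 1" "1 powr p - y powr p = (1 - y) * (p * z powr (p - 1))"
    using MVT2[OF yl der] by blast
  have "z powr (p - 1) < 1" using powr_less_mono2[of "p-1" z 1] z p y by simp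
  hence "p * z powr (p - 1) < p * 1" using p by simp
  hence "(1 - y) * (p * z powr (p - 1)) < (1 - y) * p" using yl by (intro mult_strict_left_mono) auto
  thus ?thesis using z by (simp add: algebra_simps)
qed

lemma bern_abs:
  fixes p s :: real
  assumes p: "1 < p" and s: "s \<noteq> 0"
  shows "1 - p * s < (\<bar>1 - s\<bar>) powr p"
proof (cases "s < 1")
  case True
  thus ?thesis using bern_pow[OF p, of "1-s"] s by simp
next
  case False
  hence "1 - p * s < 0" using p by (smt (verit) mult_less_cancel_left2)
  thus ?thesis by (smt (verit) powr_ge_zero)
qed

lemma bern_abs_le:
  fixes p s :: real
  assumes p: "1 < p"
  shows "1 - p * s \<le> (\<bar>1 - s\<bar>) powr p"
  using bern_abs[OF p, of s] by (cases "s = 0") auto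


lemma lp_lin_pt:
  fixes p u v al be :: real
  assumes p: "0 < p"
  shows "\<bar>al * u + be * v\<bar> powr p \<le> 2 powr p * (\<bar>al\<bar> powr p * \<bar>u\<bar> powr p + \<bar>be\<bar> powr p * \<bar>v\<bar> powr p)"
proof -
  define m where "m = max \<bar>al * u\<bar> \<bar>be * v\<bar>"
  have "\<bar>al * u + be * v\<bar> \<le> 2 * m" unfolding m_def by linarith
  hence "\<bar>al * u + be * v\<bar> powr p \<le> (2 * m) powr p"
    by (intro powr_mono2) (use p in auto)
  also have "\<dots> = 2 powr p * m powr p" by (simp add: powr_mult m_def)
  also have "m powr p \<le> \<bar>al * u\<bar> powr p + \<bar>be * v\<bar> powr p"
    unfolding m_def by (cases "\<bar>al * u\<bar> \<le> \<bar>be * v\<bar>") (auto simp: max_def)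
  hence "2 powr p * m powr p \<le> 2 powr p * (\<bar>al * u\<bar> powr p + \<bar>be * v\<bar> powr p)"
    by (intro mult_left_mono) auto
  also have "\<bar>al * u\<bar> powr p + \<bar>be * v\<bar> powr p = \<bar>al\<bar> powr p * \<bar>u\<bar> powr p + \<bar>be\<bar> powr p * \<bar>v\<bar> powr p"
    by (simp add: abs_mult powr_mult)
  finally show ?thesis .
qed

lemma lp_lin:
  fixes p al be :: real
  assumes p: "0 < p" and a: "summable (\<lambda>i. \<bar>a i\<bar> powr p)" and b: "summable (\<lambda>i. \<bar>b i\<bar> powr p)"
  shows "summable (\<lambda>i. \<bar>al * a i + be * b i\<bar> powr p)"
proof (rule summable_comparison_test)
  show "\<exists>N. \<forall>n\<ge>N. norm (\<bar>al * a n + be * b n\<bar> powr p) \<le> 2 powr p * (\<bar>al\<bar> powr p * \<bar>a n\<bar> powr p + \<bar>be\<bar> powr p * \<bar>b n\<bar> powr p)"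
    using lp_lin_pt[OF p] by auto
  show "summable (\<lambda>n. 2 powr p * (\<bar>al\<bar> powr p * \<bar>a n\<bar> powr p + \<bar>be\<bar> powr p * \<bar>b n\<bar> powr p))"
    by (intro summable_mult summable_add a b)
qed

lemma lp_diff:
  fixes p :: real
  assumes p: "0 < p" and a: "summable (\<lambda>i. \<bar>a i\<bar> powr p)" and b: "summable (\<lambda>i. \<bar>b i\<bar> powr p)"
  shows "summable (\<lambda>i. \<bar>a i - b i\<bar> powr p)"
  using lp_lin[OF p a b, of 1 "-1"] by simp

lemma split3:
  fixes f :: "nat \<Rightarrow> real"
  assumes "summable f"
  shows "suminf f = f 0 + f 1 + f 2 + (\<Sum>n. f (n + 3))"
  using suminf_split_initial_segment[OF assms, of 3] by (simp add: eval_nat_numeral lessThan_Suc algebra_simps)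

definition alpha :: "real \<Rightarrow> real" where "alpha p = 2 powr (-1 / conj_exp p)"
definition va :: "real \<Rightarrow> nat \<Rightarrow> real" where "va p = (\<lambda>i. if i = 0 \<or> i = 1 then alpha p else 0)"
definition vb :: "real \<Rightarrow> nat \<Rightarrow> real" where "vb p = (\<lambda>i. if i = 1 \<or> i = 2 then alpha p else 0)"

lemma q_gt1: "1 < p \<Longrightarrow> 1 < conj_exp p"
  unfolding conj_exp_def by (simp add: field_simps)

lemma alpha_pos: "0 < alpha p" unfolding alpha_def by simp

lemma alpha_pow: assumes "1 < p" shows "alpha p powr conj_exp p = 1/2"
proof -
  have "alpha p powr conj_exp p = 2 powr (-1 / conj_exp p * conj_exp p)"
    unfolding alpha_def by (simp add: powr_powr)
  also have "-1 / conj_exp p * conj_exp p = -1" using q_gt1[OF assms] by simp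
  finally show ?thesis by (simp add: powr_minus_divide)
qed

lemma lpnorm_finite:
  assumes "\<And>n. n \<notin> {0,1,2} \<Longrightarrow> z n = 0" "0 < p"
  shows "lpnorm p z = (\<bar>z 0\<bar> powr p + \<bar>z 1\<bar> powr p + \<bar>z 2\<bar> powr p) powr (1/p)"
proof -
  have "(\<Sum>i. \<bar>z i\<bar> powr p) = (\<Sum>i\<in>{0,1,2}. \<bar>z i\<bar> powr p)"
    by (rule suminf_finite) (use assms in auto)
  thus ?thesis unfolding lpnorm_def by (simp add: add.assoc)
qed

lemma va_sphere: assumes "1 < p" shows "va p \<in> dual_sphere p {0,1,2}"
proof -
  have q: "0 < conj_exp p" using q_gt1[OF assms] by simp
  have "lpnorm (conj_exp p) (va p) = 1"
    using alpha_pos[of p] q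
    by (subst lpnorm_finite) (auto simp: va_def alpha_pow[OF assms])
  moreover have "va p \<in> lp (conj_exp p) {0,1,2}"
    unfolding lp_def by (auto simp: va_def intro!: summable_finite[of "{0,1}"] split: if_splits)
  ultimately show ?thesis unfolding dual_sphere_def by auto
qed

lemma vb_sphere: assumes "1 < p" shows "vb p \<in> dual_sphere p {0,1,2}"
proof -
  have q: "0 < conj_exp p" using q_gt1[OF assms] by simp
  have "lpnorm (conj_exp p) (vb p) = 1"
    using alpha_pos[of p] q
    by (subst lpnorm_finite) (auto simp: vb_def alpha_pow[OF assms])
  moreover have "vb p \<in> lp (conj_exp p) {0,1,2}"
    unfolding lp_def by (auto simp: vb_def intro!: summable_finite[of "{1,2}"] split: if_splits)
  ultimately show ?thesis unfolding dual_sphere_def by auto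
qed

lemma pairing3:
  assumes "\<And>n. n \<notin> {0,1,2} \<Longrightarrow> c n = 0"
  shows "pairing c x = c 0 * x 0 + c 1 * x 1 + c 2 * x 2"
proof -
  have "(\<Sum>i. c i * x i) = (\<Sum>i\<in>{0,1,2}. c i * x i)"
    by (rule suminf_finite) (use assms in auto)
  thus ?thesis unfolding pairing_def by (simp add: add.assoc)
qed

lemma lpnorm_nonneg: "0 \<le> lpnorm p z" unfolding lpnorm_def by simp

lemma wedge_char:
  assumes p: "1 < p"
  shows "wedge p I (va p) (vb p) = {x \<in> lp p I. x 0 + x 1 \<le> 0 \<and> x 1 + x 2 \<le> 0}"
proof (intro set_eqI iffI)
  fix x assume x: "x \<in> wedge p I (va p) (vb p)"
  have na: "lpnorm (conj_exp p) (va p) = 1" and nb: "lpnorm (conj_exp p) (vb p) = 1"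
    using va_sphere[OF p] vb_sphere[OF p] unfolding dual_sphere_def by auto
  have "(\<lambda>i. (1 * va p i + 0 * vb p i) / lpnorm (conj_exp p) (\<lambda>j. 1 * va p j + 0 * vb p j)) \<in> delta p (va p) (vb p)"
    unfolding delta_def by (rule CollectI, rule exI[of _ 1], rule exI[of _ 0]) auto
  hence "va p \<in> delta p (va p) (vb p)" using na by simp
  hence "pairing (va p) x \<le> 0" using x unfolding wedge_def by auto
  hence "alpha p * (x 0 + x 1) \<le> 0" by (subst (asm) pairing3) (auto simp: va_def algebra_simps)
  hence 1: "x 0 + x 1 \<le> 0" using alpha_pos[of p] by (simp add: mult_le_0_iff)
  have "(\<lambda>i. (0 * va p i + 1 * vb p i) / lpnorm (conj_exp p) (\<lambda>j. 0 * va p j + 1 * vb p j)) \<in> delta p (va p) (vb p)"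
    unfolding delta_def by (rule CollectI, rule exI[of _ 0], rule exI[of _ 1]) auto
  hence "vb p \<in> delta p (va p) (vb p)" using nb by simp
  hence "pairing (vb p) x \<le> 0" using x unfolding wedge_def by auto
  hence "alpha p * (x 1 + x 2) \<le> 0" by (subst (asm) pairing3) (auto simp: vb_def algebra_simps)
  hence 2: "x 1 + x 2 \<le> 0" using alpha_pos[of p] by (simp add: mult_le_0_iff)
  show "x \<in> {x \<in> lp p I. x 0 + x 1 \<le> 0 \<and> x 1 + x 2 \<le> 0}" using x 1 2 unfolding wedge_def by auto
next
  fix x assume x: "x \<in> {x \<in> lp p I. x 0 + x 1 \<le> 0 \<and> x 1 + x 2 \<le> 0}"
  have "pairing c x \<le> 0" if c: "c \<in> delta p (va p) (vb p)" for c
  proof -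
    obtain l m where lm: "l \<ge> 0" "m \<ge> 0"
      and c: "c = (\<lambda>i. (l * va p i + m * vb p i) / lpnorm (conj_exp p) (\<lambda>j. l * va p j + m * vb p j))"
      using c unfolding delta_def by auto
    define N where "N = lpnorm (conj_exp p) (\<lambda>j. l * va p j + m * vb p j)"
    have N: "0 \<le> N" unfolding N_def by (rule lpnorm_nonneg)
    have pc: "pairing c x = alpha p * (l * (x 0 + x 1) + m * (x 1 + x 2)) / N"
      unfolding c N_def[symmetric] by (subst pairing3) (auto simp: va_def vb_def, cases "N = 0", auto simp: field_simps)
    have "l * (x 0 + x 1) \<le> 0" "m * (x 1 + x 2) \<le> 0"
      using x lm by (auto intro: mult_nonneg_nonpos)
    hence "alpha p * (l * (x 0 + x 1) + m * (x 1 + x 2)) \<le> 0"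
      using alpha_pos[of p] by (intro mult_nonneg_nonpos) auto
    hence "alpha p * (l * (x 0 + x 1) + m * (x 1 + x 2)) / N \<le> 0"
      using N by (rule divide_nonpos_nonneg)
    thus ?thesis using pc by simp
  qed
  thus "x \<in> wedge p I (va p) (vb p)" using x unfolding wedge_def by auto
qed


definition Sp :: "real \<Rightarrow> (nat \<Rightarrow> real) \<Rightarrow> real" where "Sp p z = (\<Sum>i. \<bar>z i\<bar> powr p)"

lemma lpnorm_Sp: "lpnorm p z = Sp p z powr (1/p)" unfolding lpnorm_def Sp_def ..

lemma polar_intro:
  assumes p: "0 < p" and x: "x \<in> lp p I" and K0: "(\<lambda>i. 0) \<in> K" and S0: "0 \<le> Sp p x"
    and le: "\<And>k. k \<in> K \<Longrightarrow> Sp p x \<le> Sp p (\<lambda>i. x i - k i)"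
    and lt: "\<And>k. k \<in> K \<Longrightarrow> k \<noteq> (\<lambda>i. 0) \<Longrightarrow> Sp p x < Sp p (\<lambda>i. x i - k i)"
  shows "x \<in> polar p I K"
proof -
  have "metric_proj p K x = {(\<lambda>i. 0)}"
  proof (intro set_eqI iffI)
    fix k assume k: "k \<in> metric_proj p K x"
    hence kK: "k \<in> K" and kle: "lpnorm p (\<lambda>i. x i - k i) \<le> lpnorm p (\<lambda>i. x i - 0)"
      using K0 unfolding metric_proj_def by auto
    show "k \<in> {(\<lambda>i. 0)}"
    proof (rule ccontr)
      assume "k \<notin> {(\<lambda>i. 0)}"
      hence "Sp p x < Sp p (\<lambda>i. x i - k i)" using lt[OF kK] by auto
      hence "Sp p x powr (1/p) < Sp p (\<lambda>i. x i - k i) powr (1/p)"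
        using S0 p by (intro powr_less_mono2) auto
      thus False using kle by (simp add: lpnorm_Sp)
    qed
  next
    fix k :: "nat \<Rightarrow> real" assume "k \<in> {(\<lambda>i. 0)}"
    hence k: "k = (\<lambda>i. 0)" by simp
    have "lpnorm p (\<lambda>i. x i - k i) \<le> lpnorm p (\<lambda>i. x i - k' i)" if "k' \<in> K" for k'
      using le[OF that] S0 p unfolding k lpnorm_Sp by (intro powr_mono2) auto
    thus "k \<in> metric_proj p K x" unfolding metric_proj_def using K0 k by auto
  qed
  thus ?thesis using x unfolding polar_def by auto
qed

lemma polar_out:
  assumes p: "0 < p" and k: "k \<in> K" and S0: "0 \<le> Sp p (\<lambda>i. x i - k i)"
    and lt: "Sp p (\<lambda>i. x i - k i) < Sp p x"
  shows "x \<notin> polar p I K"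
proof
  assume "x \<in> polar p I K"
  hence "(\<lambda>i. 0) \<in> metric_proj p K x" unfolding polar_def by auto
  hence "lpnorm p (\<lambda>i. x i - 0) \<le> lpnorm p (\<lambda>i. x i - k i)" using k unfolding metric_proj_def by auto
  moreover have "Sp p (\<lambda>i. x i - k i) powr (1/p) < Sp p x powr (1/p)"
    using S0 p lt by (intro powr_less_mono2) auto
  ultimately show False by (simp add: lpnorm_Sp)
qed

lemma Sp_split:
  fixes e k :: "nat \<Rightarrow> real"
  assumes p: "0 < p" and e: "\<forall>n. n \<notin> {0,1,2} \<longrightarrow> e n = 0" and k: "summable (\<lambda>i. \<bar>k i\<bar> powr p)"
  shows "Sp p (\<lambda>i. e i - k i) = \<bar>e 0 - k 0\<bar> powr p + \<bar>e 1 - k 1\<bar> powr p + \<bar>e 2 - k 2\<bar> powr p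
            + (\<Sum>n. \<bar>k (n + 3)\<bar> powr p)"
    and "summable (\<lambda>n. \<bar>k (n + 3)\<bar> powr p)"
    and "0 \<le> (\<Sum>n. \<bar>k (n + 3)\<bar> powr p)"
proof -
  have es: "summable (\<lambda>i. \<bar>e i\<bar> powr p)"
    by (rule summable_finite[of "{0,1,2}"]) (use e in auto)
  have "summable (\<lambda>i. \<bar>e i - k i\<bar> powr p)" by (rule lp_diff[OF p es k])
  from split3[OF this] show "Sp p (\<lambda>i. e i - k i) = \<bar>e 0 - k 0\<bar> powr p + \<bar>e 1 - k 1\<bar> powr p + \<bar>e 2 - k 2\<bar> powr p
            + (\<Sum>n. \<bar>k (n + 3)\<bar> powr p)" unfolding Sp_def using e by simp
  show s: "summable (\<lambda>n. \<bar>k (n + 3)\<bar> powr p)" by (rule iffD2[OF summable_iff_shift k])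
  show "0 \<le> (\<Sum>n. \<bar>k (n + 3)\<bar> powr p)" by (rule suminf_nonneg[OF s]) simp
qed

lemma tail_pos:
  fixes k :: "nat \<Rightarrow> real" and p :: real
  assumes k: "summable (\<lambda>i. \<bar>k i\<bar> powr p)" and n: "n \<ge> 3" "k n \<noteq> 0"
  shows "0 < (\<Sum>m. \<bar>k (m + 3)\<bar> powr p)"
proof -
  have s: "summable (\<lambda>m. \<bar>k (m + 3)\<bar> powr p)" by (rule iffD2[OF summable_iff_shift k])
  have "(\<Sum>m\<in>{n-3}. \<bar>k (m + 3)\<bar> powr p) \<le> (\<Sum>m. \<bar>k (m + 3)\<bar> powr p)"
    using s by (intro sum_le_suminf) auto
  moreover have "0 < (\<Sum>m\<in>{n-3}. \<bar>k (m + 3)\<bar> powr p)" using n by simp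
  ultimately show ?thesis by linarith
qed

lemma Sp_fin:
  assumes "\<And>n. n \<notin> {0,1,2} \<Longrightarrow> z n = 0"
  shows "Sp p z = \<bar>z 0\<bar> powr p + \<bar>z 1\<bar> powr p + \<bar>z 2\<bar> powr p"
proof -
  have "(\<Sum>i. \<bar>z i\<bar> powr p) = (\<Sum>i\<in>{0,1,2}. \<bar>z i\<bar> powr p)"
    by (rule suminf_finite) (use assms in auto)
  thus ?thesis unfolding Sp_def by (simp add: add.assoc)
qed

definition e01 :: "nat \<Rightarrow> real" where "e01 = (\<lambda>i. if i = 0 \<or> i = 1 then 1 else 0)"
definition e12 :: "nat \<Rightarrow> real" where "e12 = (\<lambda>i. if i = 1 \<or> i = 2 then 1 else 0)"

lemma core01:
  assumes p: "1 < p" and k: "summable (\<lambda>i. \<bar>k i\<bar> powr p)" and kk: "k 0 + k 1 \<le> 0"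
  shows "Sp p e01 \<le> Sp p (\<lambda>i. e01 i - k i)"
    and "k \<noteq> (\<lambda>i. 0) \<Longrightarrow> Sp p e01 < Sp p (\<lambda>i. e01 i - k i)"
proof -
  have p0: "0 < p" using p by simp
  have e: "\<And>n. n \<notin> {0,1,2} \<Longrightarrow> e01 n = 0" unfolding e01_def by auto
  have e': "\<forall>n. n \<notin> {0,1,2} \<longrightarrow> e01 n = 0" using e by auto
  note sp = Sp_split[OF p0 e' k]
  define T where "T = (\<Sum>n. \<bar>k (n + 3)\<bar> powr p)"
  have T: "0 \<le> T" using sp(3) unfolding T_def .
  have sp1: "Sp p (\<lambda>i. e01 i - k i) = \<bar>1 - k 0\<bar> powr p + \<bar>1 - k 1\<bar> powr p + \<bar>k 2\<bar> powr p + T"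
    using sp(1) unfolding T_def by (simp add: e01_def)
  have S0: "Sp p e01 = 2" using Sp_fin[OF e] by (simp add: e01_def)
  have b0: "1 - p * k 0 \<le> \<bar>1 - k 0\<bar> powr p" and b1: "1 - p * k 1 \<le> \<bar>1 - k 1\<bar> powr p"
    using bern_abs_le[OF p] by auto
  have k2: "0 \<le> \<bar>k 2\<bar> powr p" by simp
  have pk: "p * k 0 + p * k 1 \<le> 0" using kk p0 by (metis distrib_left mult_nonneg_nonpos less_imp_le)
  show "Sp p e01 \<le> Sp p (\<lambda>i. e01 i - k i)"
    unfolding S0 sp1 using b0 b1 k2 T pk by linarith
  assume "k \<noteq> (\<lambda>i. 0)"
  then obtain n where n: "k n \<noteq> 0" by auto
  consider "n = 0" | "n = 1" | "n = 2" | "n \<ge> 3" by linarith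
  thus "Sp p e01 < Sp p (\<lambda>i. e01 i - k i)"
  proof cases
    case 1
    hence "1 - p * k 0 < \<bar>1 - k 0\<bar> powr p" using bern_abs[OF p] n by auto
    thus ?thesis unfolding S0 sp1 using b0 b1 k2 T pk by linarith
  next
    case 2
    hence "1 - p * k 1 < \<bar>1 - k 1\<bar> powr p" using bern_abs[OF p] n by auto
    thus ?thesis unfolding S0 sp1 using b0 b1 k2 T pk by linarith
  next
    case 3
    hence "0 < \<bar>k 2\<bar> powr p" using n by simp
    thus ?thesis unfolding S0 sp1 using b0 b1 k2 T pk by linarith
  next
    case 4
    hence "0 < T" using tail_pos[OF k 4 n] unfolding T_def by simp
    thus ?thesis unfolding S0 sp1 using b0 b1 k2 T pk by linarith
  qed
qed

lemma core12:
  assumes p: "1 < p" and k: "summable (\<lambda>i. \<bar>k i\<bar> powr p)" and kk: "k 1 + k 2 \<le> 0"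
  shows "Sp p e12 \<le> Sp p (\<lambda>i. e12 i - k i)"
    and "k \<noteq> (\<lambda>i. 0) \<Longrightarrow> Sp p e12 < Sp p (\<lambda>i. e12 i - k i)"
proof -
  have p0: "0 < p" using p by simp
  have e: "\<And>n. n \<notin> {0,1,2} \<Longrightarrow> e12 n = 0" unfolding e12_def by auto
  have e': "\<forall>n. n \<notin> {0,1,2} \<longrightarrow> e12 n = 0" using e by auto
  note sp = Sp_split[OF p0 e' k]
  define T where "T = (\<Sum>n. \<bar>k (n + 3)\<bar> powr p)"
  have T: "0 \<le> T" using sp(3) unfolding T_def .
  have sp1: "Sp p (\<lambda>i. e12 i - k i) = \<bar>k 0\<bar> powr p + \<bar>1 - k 1\<bar> powr p + \<bar>1 - k 2\<bar> powr p + T"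
    using sp(1) unfolding T_def by (simp add: e12_def)
  have S0: "Sp p e12 = 2" using Sp_fin[OF e] by (simp add: e12_def)
  have b0: "1 - p * k 1 \<le> \<bar>1 - k 1\<bar> powr p" and b1: "1 - p * k 2 \<le> \<bar>1 - k 2\<bar> powr p"
    using bern_abs_le[OF p] by auto
  have k2: "0 \<le> \<bar>k 0\<bar> powr p" by simp
  have pk: "p * k 1 + p * k 2 \<le> 0" using kk p0 by (metis distrib_left mult_nonneg_nonpos less_imp_le)
  show "Sp p e12 \<le> Sp p (\<lambda>i. e12 i - k i)"
    unfolding S0 sp1 using b0 b1 k2 T pk by linarith
  assume "k \<noteq> (\<lambda>i. 0)"
  then obtain n where n: "k n \<noteq> 0" by auto
  consider "n = 0" | "n = 1" | "n = 2" | "n \<ge> 3" by linarith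
  thus "Sp p e12 < Sp p (\<lambda>i. e12 i - k i)"
  proof cases
    case 1
    hence "0 < \<bar>k 0\<bar> powr p" using n by simp
    thus ?thesis unfolding S0 sp1 using b0 b1 k2 T pk by linarith
  next
    case 2
    hence "1 - p * k 1 < \<bar>1 - k 1\<bar> powr p" using bern_abs[OF p] n by auto
    thus ?thesis unfolding S0 sp1 using b0 b1 k2 T pk by linarith
  next
    case 3
    hence "1 - p * k 2 < \<bar>1 - k 2\<bar> powr p" using bern_abs[OF p] n by auto
    thus ?thesis unfolding S0 sp1 using b0 b1 k2 T pk by linarith
  next
    case 4
    hence "0 < T" using tail_pos[OF k 4 n] unfolding T_def by simp
    thus ?thesis unfolding S0 sp1 using b0 b1 k2 T pk by linarith
  qed
qed


lemma mid_witness: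
  fixes p :: real
  assumes p: "1 < p" "p \<noteq> 2"
  shows "\<exists>u. 2 * \<bar>1/2 - u\<bar> powr p + \<bar>1 + u\<bar> powr p < 2 * (1/2) powr p + 1"
proof -
  define g where "g = (\<lambda>u::real. 2 * (1/2 - u) powr p + (1 + u) powr p)"
  define D where "D = p - 2 * p * (1/2) powr (p - 1)"
  have der: "(g has_real_derivative D) (at 0)"
    unfolding g_def D_def
    by (rule derivative_eq_intros refl | simp)+
  have g0: "g 0 = 2 * (1/2) powr p + 1" unfolding g_def by simp
  show ?thesis
  proof (cases "p < 2")
    case True
    have "(1/2::real) powr 1 < (1/2) powr (p - 1)"
      by (rule powr_less_mono') (use True in auto)
    hence "D < 0" unfolding D_def using p by (simp add: algebra_simps)
    then obtain d where d: "d > 0" "\<forall>h>0. h < d \<longrightarrow> g 0 > g (0 + h)"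
      using DERIV_neg_dec_right[OF der] by blast
    define h where "h = min (d/2) (1/4)"
    have h: "0 < h" "h < d" "h \<le> 1/4" unfolding h_def using d by auto
    have "g h < g 0" using d h by auto
    moreover have "g h = 2 * \<bar>1/2 - h\<bar> powr p + \<bar>1 + h\<bar> powr p" unfolding g_def using h by simp
    ultimately show ?thesis using g0 by auto
  next
    case False
    hence p2: "2 < p" using p by simp
    have "(1/2::real) powr (p - 1) < (1/2) powr 1"
      by (rule powr_less_mono') (use p2 in auto)
    hence "D > 0" unfolding D_def using p by (simp add: algebra_simps)
    then obtain d where d: "d > 0" "\<forall>h>0. h < d \<longrightarrow> g (0 - h) < g 0"
      using DERIV_pos_inc_left[OF der] by blast
    define h where "h = min (d/2) (1/4)"
    have h: "0 < h" "h < d" "h \<le> 1/4" unfolding h_def using d by auto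
    have "g (0 - h) < g 0" using d h by auto
    moreover have "g (0 - h) = 2 * \<bar>1/2 - (-h)\<bar> powr p + \<bar>1 + (-h)\<bar> powr p" unfolding g_def using h by simp
    ultimately show ?thesis using g0 by (metis diff_0)
  qed
qed


lemma lp_summable: "x \<in> lp p I \<Longrightarrow> summable (\<lambda>i. \<bar>x i\<bar> powr p)"
  unfolding lp_def by auto

lemma fin_lp:
  assumes "{0,1,2} \<subseteq> I" "\<And>n. n \<notin> {0,1,2} \<Longrightarrow> z n = 0"
  shows "z \<in> lp p I"
proof -
  have s: "summable (\<lambda>i. \<bar>z i\<bar> powr p)"
    by (rule summable_finite[of "{0,1,2}"]) (simp_all add: assms(2))
  have "\<forall>i. i \<notin> I \<longrightarrow> z i = 0" using assms by blast
  thus ?thesis unfolding lp_def using s by blast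
qed

lemma nonconvex:
  fixes p :: real
  assumes p: "1 < p" "p \<noteq> 2" and I: "{0,1,2} \<subseteq> I"
  shows "\<not> lconvex (polar p I (wedge p I (va p) (vb p)))"
proof
  define W where "W = wedge p I (va p) (vb p)"
  have W: "W = {x \<in> lp p I. x 0 + x 1 \<le> 0 \<and> x 1 + x 2 \<le> 0}"
    unfolding W_def by (rule wedge_char[OF p(1)])
  have p0: "0 < p" using p by simp
  have W0: "(\<lambda>i. 0) \<in> W" unfolding W by (auto intro: fin_lp[OF I])
  have e01: "e01 \<in> polar p I W"
  proof (rule polar_intro[OF p0 _ W0])
    show "e01 \<in> lp p I" by (rule fin_lp[OF I]) (auto simp: e01_def)
    show "0 \<le> Sp p e01" by (subst Sp_fin) (auto simp: e01_def)
    fix k assume "k \<in> W"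
    hence k: "summable (\<lambda>i. \<bar>k i\<bar> powr p)" "k 0 + k 1 \<le> 0" unfolding W by (auto intro: lp_summable)
    show "Sp p e01 \<le> Sp p (\<lambda>i. e01 i - k i)" by (rule core01(1)[OF p(1) k])
    show "k \<noteq> (\<lambda>i. 0) \<Longrightarrow> Sp p e01 < Sp p (\<lambda>i. e01 i - k i)" by (rule core01(2)[OF p(1) k])
  qed
  have e12: "e12 \<in> polar p I W"
  proof (rule polar_intro[OF p0 _ W0])
    show "e12 \<in> lp p I" by (rule fin_lp[OF I]) (auto simp: e12_def)
    show "0 \<le> Sp p e12" by (subst Sp_fin) (auto simp: e12_def)
    fix k assume "k \<in> W"
    hence k: "summable (\<lambda>i. \<bar>k i\<bar> powr p)" "k 1 + k 2 \<le> 0" unfolding W by (auto intro: lp_summable)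
    show "Sp p e12 \<le> Sp p (\<lambda>i. e12 i - k i)" by (rule core12(1)[OF p(1) k])
    show "k \<noteq> (\<lambda>i. 0) \<Longrightarrow> Sp p e12 < Sp p (\<lambda>i. e12 i - k i)" by (rule core12(2)[OF p(1) k])
  qed
  define m where "m = (\<lambda>i. 1/2 * e01 i + (1 - 1/2) * e12 i)"
  obtain u where u: "2 * \<bar>1/2 - u\<bar> powr p + \<bar>1 + u\<bar> powr p < 2 * (1/2) powr p + 1"
    using mid_witness[OF p] by blast
  define k where "k = (\<lambda>i::nat. if i = 0 \<or> i = 2 then u else if i = 1 then -u else (0::real))"
  have "k \<in> lp p I" by (rule fin_lp[OF I]) (simp add: k_def)
  hence kW: "k \<in> W" unfolding W by (simp add: k_def)
  have m0: "m 0 = 1/2" "m 1 = 1" "m 2 = 1/2" "\<And>n. n \<notin> {0,1,2} \<Longrightarrow> m n = 0"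
    unfolding m_def e01_def e12_def by auto
  have m1: "m (Suc 0) = 1" using m0(2) by simp
  have supp: "\<And>n. n \<notin> {0,1,2} \<Longrightarrow> m n - k n = 0" using m0(4) by (simp add: k_def)
  have "Sp p (\<lambda>i. m i - k i) = \<bar>1/2 - u\<bar> powr p + \<bar>1 + u\<bar> powr p + \<bar>1/2 - u\<bar> powr p"
    using Sp_fin[of "\<lambda>i. m i - k i" p, OF supp] by (simp add: m0 m1 k_def)
  moreover have "Sp p m = (1/2) powr p + 1 + (1/2) powr p"
    using Sp_fin[of m p, OF m0(4)] by (simp add: m0 m1)
  ultimately have notin: "m \<notin> polar p I W"
    using u by (intro polar_out[OF p0 kW]) auto
  assume cv: "lconvex (polar p I (wedge p I (va p) (vb p)))"
  hence "\<forall>t. 0 \<le> t \<and> t \<le> 1 \<longrightarrow> (\<lambda>i. t * e01 i + (1 - t) * e12 i) \<in> polar p I W"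
    using e01 e12 unfolding lconvex_def W_def by blast
  hence "m \<in> polar p I W" unfolding m_def by (rule allE[of _ "1/2"]) simp
  thus False using notin by blast
qed



lemma abs_powr2: "\<bar>a::real\<bar> powr 2 = a\<^sup>2"
proof (cases "a = 0")
  case False
  hence "\<bar>a\<bar> powr (real 2) = \<bar>a\<bar> ^ 2" by (intro powr_realpow) auto
  thus ?thesis by simp
qed simp

lemma sq_summable: "x \<in> lp 2 I \<Longrightarrow> summable (\<lambda>i. (x i)\<^sup>2)"
  using lp_summable[of x 2 I] by (simp add: abs_powr2)

lemma Sp2: "Sp 2 z = (\<Sum>i. (z i)\<^sup>2)" unfolding Sp_def by (simp add: abs_powr2)

lemma prod_summable:
  fixes x k :: "nat \<Rightarrow> real"
  assumes x: "summable (\<lambda>i. (x i)\<^sup>2)" and k: "summable (\<lambda>i. (k i)\<^sup>2)"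
  shows "summable (\<lambda>i. x i * k i)"
proof (rule summable_comparison_test)
  show "\<exists>N. \<forall>n\<ge>N. norm (x n * k n) \<le> ((x n)\<^sup>2 + (k n)\<^sup>2) / 2"
  proof (intro exI allI impI)
    fix n
    have "0 \<le> (\<bar>x n\<bar> - \<bar>k n\<bar>)\<^sup>2" by simp
    thus "norm (x n * k n) \<le> ((x n)\<^sup>2 + (k n)\<^sup>2) / 2"
      by (simp add: power2_eq_square abs_mult algebra_simps)
  qed
  show "summable (\<lambda>n. ((x n)\<^sup>2 + (k n)\<^sup>2) / 2)"
    by (intro summable_divide summable_add x k)
qed

lemma expand:
  fixes x k :: "nat \<Rightarrow> real"
  assumes x: "summable (\<lambda>i. (x i)\<^sup>2)" and k: "summable (\<lambda>i. (k i)\<^sup>2)"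
  shows "(\<Sum>i. (x i - t * k i)\<^sup>2) = (\<Sum>i. (x i)\<^sup>2) - 2 * t * (\<Sum>i. x i * k i) + t\<^sup>2 * (\<Sum>i. (k i)\<^sup>2)"
proof -
  have xk: "summable (\<lambda>i. x i * k i)" by (rule prod_summable[OF x k])
  have "(\<lambda>i. (x i)\<^sup>2 - 2 * t * (x i * k i) + t\<^sup>2 * (k i)\<^sup>2) sums
        ((\<Sum>i. (x i)\<^sup>2) - 2 * t * (\<Sum>i. x i * k i) + t\<^sup>2 * (\<Sum>i. (k i)\<^sup>2))"
    by (intro sums_add sums_diff sums_mult summable_sums x k xk)
  moreover have "(\<lambda>i. (x i)\<^sup>2 - 2 * t * (x i * k i) + t\<^sup>2 * (k i)\<^sup>2) = (\<lambda>i. (x i - t * k i)\<^sup>2)"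
    by (rule ext) (simp add: power2_eq_square algebra_simps)
  ultimately show ?thesis by (simp add: sums_iff)
qed

lemma cone0: "lcone K \<Longrightarrow> (\<lambda>i. 0) \<in> K"
proof -
  assume c: "lcone K"
  then obtain k where k: "k \<in> K" unfolding lcone_def by auto
  hence "(\<lambda>i. 0 * k i) \<in> K" using c unfolding lcone_def by blast
  thus "(\<lambda>i. 0) \<in> K" by simp
qed

lemma polar2_iff:
  assumes K: "closed_convex_cone 2 UNIV K" and x: "x \<in> lp 2 UNIV"
  shows "x \<in> polar 2 UNIV K \<longleftrightarrow> (\<forall>k\<in>K. (\<Sum>i. x i * k i) \<le> 0)"
proof
  have Klp: "K \<subseteq> lp 2 UNIV" and Kc: "lcone K" using K unfolding closed_convex_cone_def by auto
  have xs: "summable (\<lambda>i. (x i)\<^sup>2)" by (rule sq_summable[OF x])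
  assume xp: "x \<in> polar 2 UNIV K"
  hence mp: "(\<lambda>i. 0) \<in> metric_proj 2 K x" unfolding polar_def by auto
  show "\<forall>k\<in>K. (\<Sum>i. x i * k i) \<le> 0"
  proof (rule ballI, rule ccontr)
    fix k assume kK: "k \<in> K" and P: "\<not> (\<Sum>i. x i * k i) \<le> 0"
    define P where "P = (\<Sum>i. x i * k i)"
    define Q where "Q = (\<Sum>i. (k i)\<^sup>2)"
    have ks: "summable (\<lambda>i. (k i)\<^sup>2)" using kK Klp sq_summable by blast
    have Q: "0 \<le> Q" unfolding Q_def by (rule suminf_nonneg[OF ks]) simp
    have Pp: "0 < P" using P unfolding P_def by simp
    define t where "t = P / (Q + 1)"
    have t: "0 < t" unfolding t_def using Pp Q by simp
    have tk: "(\<lambda>i. t * k i) \<in> K" using Kc kK t unfolding lcone_def by auto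
    have "lpnorm 2 (\<lambda>i. x i - 0) \<le> lpnorm 2 (\<lambda>i. x i - t * k i)"
      using mp tk unfolding metric_proj_def by auto
    hence a: "Sp 2 x powr (1/2) \<le> Sp 2 (\<lambda>i. x i - t * k i) powr (1/2)" by (simp add: lpnorm_Sp)
    have klp: "k \<in> lp 2 UNIV" using kK Klp by blast
    have sm: "summable (\<lambda>i. \<bar>x i - t * k i\<bar> powr 2)"
      using lp_lin[OF _ lp_summable[OF x] lp_summable[OF klp], of 1 "-t"] by simp
    have S1: "0 \<le> Sp 2 (\<lambda>i. x i - t * k i)" unfolding Sp_def by (rule suminf_nonneg[OF sm]) simp
    have "Sp 2 x \<le> Sp 2 (\<lambda>i. x i - t * k i)"
    proof (rule ccontr)
      assume "\<not> Sp 2 x \<le> Sp 2 (\<lambda>i. x i - t * k i)"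
      hence "Sp 2 (\<lambda>i. x i - t * k i) < Sp 2 x" by simp
      hence "Sp 2 (\<lambda>i. x i - t * k i) powr (1/2) < Sp 2 x powr (1/2)"
        using S1 by (intro powr_less_mono2) auto
      thus False using a by simp
    qed
    hence "(\<Sum>i. (x i)\<^sup>2) \<le> (\<Sum>i. (x i)\<^sup>2) - 2 * t * P + t\<^sup>2 * Q"
      unfolding Sp2 expand[OF xs ks] P_def Q_def .
    hence "2 * t * P \<le> t * (t * Q)" by (simp add: power2_eq_square algebra_simps)
    hence "2 * P \<le> t * Q" using t by simp
    moreover have "t * Q < P"
    proof -
      have "t * Q = P * (Q / (Q + 1))" unfolding t_def by simp
      also have "\<dots> < P * 1" using Pp Q by (intro mult_strict_left_mono) auto
      finally show ?thesis by simp
    qed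
    ultimately show False using Pp by linarith
  qed
next
  have Klp: "K \<subseteq> lp 2 UNIV" and Kc: "lcone K" using K unfolding closed_convex_cone_def by auto
  have xs: "summable (\<lambda>i. (x i)\<^sup>2)" by (rule sq_summable[OF x])
  assume H: "\<forall>k\<in>K. (\<Sum>i. x i * k i) \<le> 0"
  show "x \<in> polar 2 UNIV K"
  proof (rule polar_intro[OF _ x cone0[OF Kc]])
    show "0 < (2::real)" by simp
    show "0 \<le> Sp 2 x" unfolding Sp2 by (rule suminf_nonneg[OF xs]) simp
    fix k assume kK: "k \<in> K"
    have ks: "summable (\<lambda>i. (k i)\<^sup>2)" using kK Klp sq_summable by blast
    have Q: "0 \<le> (\<Sum>i. (k i)\<^sup>2)" by (rule suminf_nonneg[OF ks]) simp
    have e: "Sp 2 (\<lambda>i. x i - k i) = (\<Sum>i. (x i)\<^sup>2) - 2 * (\<Sum>i. x i * k i) + (\<Sum>i. (k i)\<^sup>2)"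
      unfolding Sp2 using expand[OF xs ks, of 1] by simp
    show "Sp 2 x \<le> Sp 2 (\<lambda>i. x i - k i)" unfolding e using H kK Q unfolding Sp2 by auto
    assume k0: "k \<noteq> (\<lambda>i. 0)"
    have "(\<Sum>i. (k i)\<^sup>2) \<noteq> 0"
    proof
      assume "(\<Sum>i. (k i)\<^sup>2) = 0"
      hence "\<forall>n. (k n)\<^sup>2 = 0" using suminf_eq_zero_iff[OF ks] by simp
      hence "k = (\<lambda>i. 0)" by auto
      thus False using k0 by simp
    qed
    hence "0 < (\<Sum>i. (k i)\<^sup>2)" using Q by simp
    thus "Sp 2 x < Sp 2 (\<lambda>i. x i - k i)" unfolding e using H kK unfolding Sp2 by auto
  qed
qed

lemma polar2_convex:
  assumes K: "closed_convex_cone 2 UNIV K"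
  shows "lconvex (polar 2 UNIV K)"
  unfolding lconvex_def
proof (intro ballI allI impI)
  have Klp: "K \<subseteq> lp 2 UNIV" using K unfolding closed_convex_cone_def by auto
  fix x y and t :: real
  assume xp: "x \<in> polar 2 UNIV K" and yp: "y \<in> polar 2 UNIV K" and t: "0 \<le> t \<and> t \<le> 1"
  have x: "x \<in> lp 2 UNIV" and y: "y \<in> lp 2 UNIV" using xp yp unfolding polar_def by auto
  have w: "(\<lambda>i. t * x i + (1 - t) * y i) \<in> lp 2 UNIV"
    unfolding lp_def using lp_lin[of 2 x y t "1 - t"] lp_summable[OF x] lp_summable[OF y] by simp
  have Hx: "\<forall>k\<in>K. (\<Sum>i. x i * k i) \<le> 0" using polar2_iff[OF K x] xp by blast
  have Hy: "\<forall>k\<in>K. (\<Sum>i. y i * k i) \<le> 0" using polar2_iff[OF K y] yp by blast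
  have "\<forall>k\<in>K. (\<Sum>i. (t * x i + (1 - t) * y i) * k i) \<le> 0"
  proof
    fix k assume kK: "k \<in> K"
    have ks: "summable (\<lambda>i. (k i)\<^sup>2)" using kK Klp sq_summable by blast
    have xk: "summable (\<lambda>i. x i * k i)" by (rule prod_summable[OF sq_summable[OF x] ks])
    have yk: "summable (\<lambda>i. y i * k i)" by (rule prod_summable[OF sq_summable[OF y] ks])
    have "(\<lambda>i. t * (x i * k i) + (1 - t) * (y i * k i)) sums (t * (\<Sum>i. x i * k i) + (1 - t) * (\<Sum>i. y i * k i))"
      by (intro sums_add sums_mult summable_sums xk yk)
    moreover have "(\<lambda>i. t * (x i * k i) + (1 - t) * (y i * k i)) = (\<lambda>i. (t * x i + (1 - t) * y i) * k i)"
      by (rule ext) (simp add: algebra_simps)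
    ultimately have "(\<Sum>i. (t * x i + (1 - t) * y i) * k i) = t * (\<Sum>i. x i * k i) + (1 - t) * (\<Sum>i. y i * k i)"
      by (simp add: sums_iff)
    also have "\<dots> \<le> 0" using Hx Hy kK t
      by (intro add_nonpos_nonpos mult_nonneg_nonpos) auto
    finally show "(\<Sum>i. (t * x i + (1 - t) * y i) * k i) \<le> 0" .
  qed
  thus "(\<lambda>i. t * x i + (1 - t) * y i) \<in> polar 2 UNIV K" using polar2_iff[OF K w] by blast
qed



lemma coord_le:
  fixes z :: "nat \<Rightarrow> real"
  assumes p: "0 < p" and s: "summable (\<lambda>i. \<bar>z i\<bar> powr p)"
  shows "\<bar>z i\<bar> \<le> lpnorm p z"
proof -
  have "(\<Sum>j\<in>{i}. \<bar>z j\<bar> powr p) \<le> (\<Sum>j. \<bar>z j\<bar> powr p)"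
    using s by (intro sum_le_suminf) auto
  hence "\<bar>z i\<bar> powr p \<le> (\<Sum>j. \<bar>z j\<bar> powr p)" by simp
  hence "(\<bar>z i\<bar> powr p) powr (1/p) \<le> (\<Sum>j. \<bar>z j\<bar> powr p) powr (1/p)"
    using p by (intro powr_mono2) auto
  moreover have "(\<bar>z i\<bar> powr p) powr (1/p) = \<bar>z i\<bar>"
    using p by (simp add: powr_powr)
  ultimately show ?thesis unfolding lpnorm_def by simp
qed

lemma wedge_ccc:
  fixes p :: real
  assumes p: "1 < p"
  shows "closed_convex_cone p UNIV (wedge p UNIV (va p) (vb p))"
proof -
  have p0: "0 < p" using p by simp
  define W where "W = wedge p UNIV (va p) (vb p)"
  have W: "W = {x \<in> lp p UNIV. x 0 + x 1 \<le> 0 \<and> x 1 + x 2 \<le> 0}"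
    unfolding W_def by (rule wedge_char[OF p])
  have lpU: "x \<in> lp p UNIV \<longleftrightarrow> summable (\<lambda>i. \<bar>x i\<bar> powr p)" for x
    unfolding lp_def by simp
  have sub: "W \<subseteq> lp p UNIV" unfolding W by auto
  have cv: "lconvex W" unfolding lconvex_def
  proof (intro ballI allI impI)
    fix x y and t :: real
    assume x: "x \<in> W" and y: "y \<in> W" and t: "0 \<le> t \<and> t \<le> 1"
    have xs: "summable (\<lambda>i. \<bar>x i\<bar> powr p)" and ys: "summable (\<lambda>i. \<bar>y i\<bar> powr p)"
      using x y unfolding W lpU by auto
    have l: "(\<lambda>i. t * x i + (1 - t) * y i) \<in> lp p UNIV"
      unfolding lpU by (rule lp_lin[OF p0 xs ys])
    have a1: "t * (x 0 + x 1) \<le> 0" "(1 - t) * (y 0 + y 1) \<le> 0"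
      "t * (x 1 + x 2) \<le> 0" "(1 - t) * (y 1 + y 2) \<le> 0"
      using x y t unfolding W by (auto intro: mult_nonneg_nonpos)
    show "(\<lambda>i. t * x i + (1 - t) * y i) \<in> W"
      unfolding W using l a1 by (simp add: algebra_simps)
  qed
  have W0: "(\<lambda>i. 0) \<in> W" unfolding W lpU by simp
  have cone: "lcone W" unfolding lcone_def
  proof (intro conjI ballI allI impI)
    show "W \<noteq> {}" using W0 by auto
    fix x and t :: real assume x: "x \<in> W" and t: "0 \<le> t"
    have xs: "summable (\<lambda>i. \<bar>x i\<bar> powr p)" using x unfolding W lpU by auto
    have l: "(\<lambda>i. t * x i) \<in> lp p UNIV"
      unfolding lpU using lp_lin[OF p0 xs xs, of t 0] by simp
    have "t * (x 0 + x 1) \<le> 0" "t * (x 1 + x 2) \<le> 0"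
      using x t unfolding W by (auto intro: mult_nonneg_nonpos)
    thus "(\<lambda>i. t * x i) \<in> W" unfolding W using l by (simp add: algebra_simps)
  qed
  have cl: "lp_closed p UNIV W" unfolding lp_closed_def
  proof (intro allI impI)
    fix xs :: "nat \<Rightarrow> nat \<Rightarrow> real" and x
    assume H: "(\<forall>n. xs n \<in> W) \<and> x \<in> lp p UNIV \<and> (\<lambda>n. lpnorm p (\<lambda>i. xs n i - x i)) \<longlonglongrightarrow> 0"
    have xsum: "summable (\<lambda>i. \<bar>x i\<bar> powr p)" using H unfolding lpU by auto
    have conv: "(\<lambda>n. xs n i) \<longlonglongrightarrow> x i" for i
    proof -
      have "(\<lambda>n. xs n i - x i) \<longlonglongrightarrow> 0"
      proof (rule Lim_null_comparison)
        show "\<forall>\<^sub>F n in sequentially. norm (xs n i - x i) \<le> lpnorm p (\<lambda>i. xs n i - x i)"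
        proof (rule always_eventually, rule allI)
          fix n
          have "summable (\<lambda>i. \<bar>xs n i\<bar> powr p)" using H unfolding W lpU by auto
          hence "summable (\<lambda>i. \<bar>xs n i - x i\<bar> powr p)" by (rule lp_diff[OF p0 _ xsum])
          thus "norm (xs n i - x i) \<le> lpnorm p (\<lambda>i. xs n i - x i)"
            using coord_le[OF p0, of "\<lambda>i. xs n i - x i" i] by simp
        qed
        show "(\<lambda>n. lpnorm p (\<lambda>i. xs n i - x i)) \<longlonglongrightarrow> 0" using H by blast
      qed
      thus ?thesis by (simp add: LIM_zero_iff)
    qed
    have "(\<lambda>n. xs n 0 + xs n 1) \<longlonglongrightarrow> x 0 + x 1" by (intro tendsto_add conv)
    hence i1: "x 0 + x 1 \<le> 0" by (rule LIMSEQ_le_const2) (use H in \<open>auto simp: W\<close>)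
    have "(\<lambda>n. xs n 1 + xs n 2) \<longlonglongrightarrow> x 1 + x 2" by (intro tendsto_add conv)
    hence i2: "x 1 + x 2 \<le> 0" by (rule LIMSEQ_le_const2) (use H in \<open>auto simp: W\<close>)
    show "x \<in> W" unfolding W using H i1 i2 by auto
  qed
  show ?thesis unfolding W_def[symmetric] closed_convex_cone_def using sub cl cv cone by auto
qed

theorem mainTheorem8:
  fixes p :: real
  assumes "1 < p"
  shows "((\<forall>K. closed_convex_cone p UNIV K \<longrightarrow> lconvex (polar p UNIV K)) \<longleftrightarrow> p = 2)
    \<and> (p \<noteq> 2 \<longrightarrow>
        (\<exists>a b. a \<in> dual_sphere p {0,1,2} \<and> b \<in> dual_sphere p {0,1,2} \<and>
               b \<noteq> a \<and> b \<noteq> (\<lambda>i. - a i) \<and>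
               \<not> lconvex (polar p UNIV (wedge p UNIV a b)) \<and>
               \<not> lconvex (polar p {0,1,2} (wedge p {0,1,2} a b))))"
proof (intro conjI impI iffI)
  assume "p = 2"
  thus "\<forall>K. closed_convex_cone p UNIV K \<longrightarrow> lconvex (polar p UNIV K)"
    using polar2_convex by blast
next
  assume H: "\<forall>K. closed_convex_cone p UNIV K \<longrightarrow> lconvex (polar p UNIV K)"
  show "p = 2"
  proof (rule ccontr)
    assume "p \<noteq> 2"
    hence "\<not> lconvex (polar p UNIV (wedge p UNIV (va p) (vb p)))"
      using nonconvex[OF assms] by auto
    thus False using H wedge_ccc[OF assms] by blast
  qed
next
  assume p2: "p \<noteq> 2"
  have ne1: "vb p \<noteq> va p"
  proof
    assume "vb p = va p"
    hence "vb p 0 = va p 0" by simp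
    thus False using alpha_pos[of p] by (simp add: va_def vb_def)
  qed
  have ne2: "vb p \<noteq> (\<lambda>i. - va p i)"
  proof
    assume "vb p = (\<lambda>i. - va p i)"
    hence "vb p 1 = - va p 1" by (rule fun_cong)
    thus False using alpha_pos[of p] by (simp add: va_def vb_def)
  qed
  show "\<exists>a b. a \<in> dual_sphere p {0,1,2} \<and> b \<in> dual_sphere p {0,1,2} \<and>
               b \<noteq> a \<and> b \<noteq> (\<lambda>i. - a i) \<and>
               \<not> lconvex (polar p UNIV (wedge p UNIV a b)) \<and>
               \<not> lconvex (polar p {0,1,2} (wedge p {0,1,2} a b))"
    using va_sphere[OF assms] vb_sphere[OF assms] ne1 ne2
      nonconvex[OF assms p2, of UNIV] nonconvex[OF assms p2, of "{0,1,2}"] by blast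
qed

end
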